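(* There exist absolute positive constants $c,C$ such that the following holds. For a positive integer $n$ let $\pi$ be a uniformly random permutation of $\{1,\dots,n\}$ and $W=\sum_{i=1}^n \mathbf 1\{\pi(i)=i\}$ its number of fixed points. Let $Y\sim\mathrm{Poi}(1)$. Then for all positive integers $k$ with $k^2/n\le c$, $$\Big|\frac{P(W\ge k)}{P(Y\ge k)}-1\Big|\le \frac{Ck^2}{n}.$$
   Context: $\mathrm{Poi}(1)$ is the Poisson distribution with mean $1$. *)

theory Defs
  imports "HOL-Probability.Probability" "HOL-Combinatorics.Permutations"
begin

definition unif_perm :: "nat \<Rightarrow> (nat \<Rightarrow> nat) pmf" where
  "unif_perm n = pmf_of_set {\<sigma>. \<sigma> permutes {1..n}}"

definition num_fixed :: "nat \<Rightarrow> (nat \<Rightarrow> nat) \<Rightarrow> nat" where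
  "num_fixed n \<sigma> = card {i \<in> {1..n}. \<sigma> i = i}"

end

theory Submission imports Defs begin

lemma perm_fix_eq:
  assumes "S \<subseteq> {1..n}"
  shows "{\<sigma>. \<sigma> permutes {1..n} \<and> (\<forall>i\<in>S. \<sigma> i = i)} = {\<sigma>. \<sigma> permutes ({1..n} - S)}"
proof (intro equalityI subsetI)
  fix \<sigma> assume "\<sigma> \<in> {\<sigma>. \<sigma> permutes {1..n} \<and> (\<forall>i\<in>S. \<sigma> i = i)}"
  then show "\<sigma> \<in> {\<sigma>. \<sigma> permutes ({1..n} - S)}"
    unfolding permutes_def by auto
next
  fix \<sigma> assume "\<sigma> \<in> {\<sigma>. \<sigma> permutes ({1..n} - S)}"
  then have "\<sigma> permutes ({1..n} - S)" by simp
  then show "\<sigma> \<in> {\<sigma>. \<sigma> permutes {1..n} \<and> (\<forall>i\<in>S. \<sigma> i = i)}"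
    using permutes_subset[of \<sigma> "{1..n} - S" "{1..n}"] permutes_not_in[of \<sigma> "{1..n} - S"] by auto
qed

lemma card_fix:
  assumes "S \<subseteq> {1..n}"
  shows "card {\<sigma>. \<sigma> permutes {1..n} \<and> (\<forall>i\<in>S. \<sigma> i = i)} = fact (n - card S)"
proof -
  have "finite S" using assms finite_subset by blast
  have "card ({1..n} - S) = n - card S" using assms \<open>finite S\<close> by (simp add: card_Diff_subset)
  then show ?thesis unfolding perm_fix_eq[OF assms]
    by (intro card_permutations) auto
qed

lemma card_indicator:
  assumes "finite A"
  shows "card {x\<in>A. P x} = (\<Sum>x\<in>A. if P x then 1 else 0::nat)"
  using assms by (simp add: sum.If_cases Int_def)

lemma moment:
  "(\<Sum>\<sigma>\<in>{\<sigma>. \<sigma> permutes {1..n}}. num_fixed n \<sigma> choose j) = (n choose j) * fact (n-j)"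
proof -
  let ?P = "{\<sigma>. \<sigma> permutes {1..(n::nat)}}"
  let ?Q = "{S. S \<subseteq> {1..n} \<and> card S = j}"
  have finP: "finite ?P" by (simp add: finite_permutations)
  have finQ: "finite ?Q" by simp
  have 1: "num_fixed n \<sigma> choose j = (\<Sum>S\<in>?Q. if (\<forall>i\<in>S. \<sigma> i = i) then 1 else 0)" for \<sigma>
  proof -
    have "num_fixed n \<sigma> choose j = card {S. S \<subseteq> {i \<in> {1..n}. \<sigma> i = i} \<and> card S = j}"
      unfolding num_fixed_def by (simp add: n_subsets)
    also have "{S. S \<subseteq> {i \<in> {1..n}. \<sigma> i = i} \<and> card S = j} = {S\<in>?Q. \<forall>i\<in>S. \<sigma> i = i}"
      by auto
    also have "card \<dots> = (\<Sum>S\<in>?Q. if (\<forall>i\<in>S. \<sigma> i = i) then 1 else 0)"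
      using finQ by (rule card_indicator)
    finally show ?thesis .
  qed
  have "(\<Sum>\<sigma>\<in>?P. num_fixed n \<sigma> choose j) = (\<Sum>\<sigma>\<in>?P. \<Sum>S\<in>?Q. if (\<forall>i\<in>S. \<sigma> i = i) then 1 else 0)"
    using 1 by simp
  also have "\<dots> = (\<Sum>S\<in>?Q. \<Sum>\<sigma>\<in>?P. if (\<forall>i\<in>S. \<sigma> i = i) then 1 else 0)"
    by (rule sum.swap)
  also have "\<dots> = (\<Sum>S\<in>?Q. fact (n - j))"
  proof (rule sum.cong[OF refl])
    fix S assume S: "S \<in> ?Q"
    have "(\<Sum>\<sigma>\<in>?P. if (\<forall>i\<in>S. \<sigma> i = i) then 1 else (0::nat)) = card {\<sigma>\<in>?P. \<forall>i\<in>S. \<sigma> i = i}"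
      using finP by (rule card_indicator[symmetric])
    also have "{\<sigma>\<in>?P. \<forall>i\<in>S. \<sigma> i = i} = {\<sigma>. \<sigma> permutes {1..n} \<and> (\<forall>i\<in>S. \<sigma> i = i)}" by auto
    also have "card \<dots> = fact (n - j)" using S card_fix[of S n] by auto
    finally show "(\<Sum>\<sigma>\<in>?P. if (\<forall>i\<in>S. \<sigma> i = i) then 1 else (0::nat)) = fact (n - j)" by simp
  qed
  also have "\<dots> = (n choose j) * fact (n - j)" by (simp add: n_subsets)
  finally show ?thesis .
qed

lemma ident:
  fixes w m N :: nat
  assumes "w \<le> m + N"
  shows "(\<Sum>i\<le>N. (-1)^i * real (m+i choose m) * real (w choose (m+i))) = (if w = m then 1 else 0)"
proof (cases "w < m")
  case True
  then show ?thesis by (simp add: binomial_eq_0)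
next
  case False
  have "(\<Sum>i\<le>N. (-1)^i * real (m+i choose m) * real (w choose (m+i)))
     = (\<Sum>i\<le>N. real (w choose m) * ((-1)^i * real (w - m choose i)))"
  proof (rule sum.cong[OF refl])
    fix i assume "i \<in> {..N}"
    show "(-1)^i * real (m+i choose m) * real (w choose (m+i)) = real (w choose m) * ((-1)^i * real (w - m choose i))"
    proof (cases "m + i \<le> w")
      case True
      have "(w choose (m+i)) * ((m+i) choose m) = (w choose m) * ((w - m) choose (m + i - m))"
        by (rule choose_mult) (use True in auto)
      then have "real (w choose (m+i)) * real ((m+i) choose m) = real (w choose m) * real ((w - m) choose i)"
        by (metis add_diff_cancel_left' of_nat_mult)
      then show ?thesis by (simp add: algebra_simps)
    next
      case False
      then show ?thesis by (simp add: binomial_eq_0, arith)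
    qed
  qed
  also have "\<dots> = real (w choose m) * (\<Sum>i\<le>N. (-1)^i * real (w - m choose i))"
    by (simp add: sum_distrib_left)
  also have "(\<Sum>i\<le>N. (-1)^i * real (w - m choose i)) = (\<Sum>i\<le>w-m. (-1)^i * real (w - m choose i))"
    by (rule sum.mono_neutral_right) (use assms in auto)
  finally show ?thesis
    using choose_alternating_sum[of "w-m", where 'a=real] False by (cases "w = m") auto
qed

lemma count_eq:
  assumes "m \<le> n"
  shows "(\<Sum>\<sigma>\<in>{\<sigma>. \<sigma> permutes {1..n}}. if num_fixed n \<sigma> = m then 1 else 0::real)
     = fact n / fact m * (\<Sum>i\<le>n-m. (-1)^i / fact i)"
proof -
  let ?P = "{\<sigma>. \<sigma> permutes {1..(n::nat)}}"
  have le: "num_fixed n \<sigma> \<le> m + (n - m)" for \<sigma>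
  proof -
    have "card {i \<in> {1..n}. \<sigma> i = i} \<le> card {1..n}" by (rule card_mono) auto
    then show ?thesis unfolding num_fixed_def using assms by simp
  qed
  have "(\<Sum>\<sigma>\<in>?P. if num_fixed n \<sigma> = m then 1 else 0::real)
     = (\<Sum>\<sigma>\<in>?P. \<Sum>i\<le>n-m. (-1)^i * real (m+i choose m) * real (num_fixed n \<sigma> choose (m+i)))"
    using ident[OF le] by simp
  also have "\<dots> = (\<Sum>i\<le>n-m. \<Sum>\<sigma>\<in>?P. (-1)^i * real (m+i choose m) * real (num_fixed n \<sigma> choose (m+i)))"
    by (rule sum.swap)
  also have "\<dots> = (\<Sum>i\<le>n-m. (-1)^i * real (m+i choose m) * real ((n choose (m+i)) * fact (n - (m+i))))"
  proof (rule sum.cong[OF refl])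
    fix i assume "i \<in> {..n-m}"
    have "(\<Sum>\<sigma>\<in>?P. (-1)^i * real (m+i choose m) * real (num_fixed n \<sigma> choose (m+i)))
       = (-1)^i * real (m+i choose m) * real (\<Sum>\<sigma>\<in>?P. num_fixed n \<sigma> choose (m+i))"
      by (simp add: sum_distrib_left)
    then show "(\<Sum>\<sigma>\<in>?P. (-1)^i * real (m+i choose m) * real (num_fixed n \<sigma> choose (m+i)))
       = (-1)^i * real (m+i choose m) * real ((n choose (m+i)) * fact (n - (m+i)))"
      by (simp only: moment)
  qed
  also have "\<dots> = (\<Sum>i\<le>n-m. fact n / fact m * ((-1)^i / fact i))"
  proof (rule sum.cong[OF refl])
    fix i assume "i \<in> {..n-m}"
    then have i: "m + i \<le> n" using assms by auto
    have a: "real (m+i choose m) = fact (m+i) / (fact m * fact i)"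
      using binomial_fact[of m "m+i", where 'a=real] by simp
    have b: "real (n choose (m+i)) = fact n / (fact (m+i) * fact (n - (m+i)))"
      using binomial_fact[OF i, where 'a=real] by simp
    show "(-1)^i * real (m+i choose m) * real ((n choose (m+i)) * fact (n - (m+i))) = fact n / fact m * ((-1)^i / fact i)"
      unfolding of_nat_mult a b by (simp add: field_simps)
  qed
  also have "\<dots> = fact n / fact m * (\<Sum>i\<le>n-m. (-1)^i / fact i)"
    by (simp add: sum_distrib_left)
  finally show ?thesis .
qed

lemma exp_err:
  "\<bar>exp (-1) - (\<Sum>i<L. (-1)^i / fact i)\<bar> \<le> 1 / (fact L :: real)"
proof -
  let ?a = "\<lambda>i. 1 / (fact i :: real)"
  have sm: "(\<lambda>n. (-1::real)^n / fact n) sums exp (-1)"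
    using exp_converges[of "-1::real"] by (simp add: divide_inverse mult.commute)
  have "summable (\<lambda>n. (1::real)^n /\<^sub>R fact n)"
    by (rule sums_summable[OF exp_converges[of "1::real"]])
  then have z: "?a \<longlonglongrightarrow> 0"
    using summable_LIMSEQ_zero by (simp add: divide_inverse)
  have mono: "monoseq ?a"
    by (rule decseq_imp_monoseq) (simp add: decseq_SucI divide_simps fact_mono)
  note L = summable_Leibniz[OF z mono]
  have eq: "(\<Sum>i. (-1)^i * ?a i) = exp (-1)"
    using sm by (simp add: sums_iff)
  have ps: "(\<Sum>i<n. (-1)^i * ?a i) = (\<Sum>i<n. (-1)^i / fact i)" for n
    by simp
    define s where "s n = (\<Sum>i<n. (-1)^i / (fact i::real))" for n
  have b: "s (2*n) \<le> exp (-1) \<and> exp (-1) \<le> s (2*n+1)" for n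
    using L(2) eq ps unfolding s_def by simp
  have sS: "s (Suc n) = s n + (-1)^n / fact n" for n
    unfolding s_def by simp
  show ?thesis
  proof (cases "even L")
    case True
    then obtain n where n: "L = 2*n" by auto
    have "s L \<le> exp (-1)" "exp (-1) \<le> s L + 1 / fact L"
      using b[of n] sS[of "2*n"] n by simp_all
    then show ?thesis unfolding s_def by linarith
  next
    case False
    then obtain n where n: "L = 2*n+1" by (metis oddE)
    have "exp (-1) \<le> s L" "s L - 1 / fact L \<le> exp (-1)"
      using b[of n] b[of "Suc n"] sS[of "2*n+1"] n by simp_all
    then show ?thesis unfolding s_def by linarith
  qed
qed

lemma probW:
  assumes "k \<le> n"
  shows "measure_pmf.prob (unif_perm n) {\<sigma>. num_fixed n \<sigma> \<ge> k}
      = 1 - (\<Sum>m<k. (\<Sum>i<Suc (n-m). (-1)^i / fact i) / fact m)"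
proof -
  let ?P = "{\<sigma>. \<sigma> permutes {1..(n::nat)}}"
  have finP: "finite ?P" by (simp add: finite_permutations)
  have neP: "?P \<noteq> {}" using permutes_id by blast
  have cP: "card ?P = fact n" by (rule card_permutations) auto
  have "real (card (?P \<inter> {\<sigma>. num_fixed n \<sigma> \<ge> k})) = (\<Sum>\<sigma>\<in>?P \<inter> {\<sigma>. num_fixed n \<sigma> \<ge> k}. 1::real)"
    by simp
  also have "\<dots> = (\<Sum>\<sigma>\<in>?P. if \<sigma> \<in> {\<sigma>. num_fixed n \<sigma> \<ge> k} then 1 else 0)"
    using finP by (rule sum.inter_restrict)
  also have "\<dots> = (\<Sum>\<sigma>\<in>?P. 1 - (\<Sum>m<k. if num_fixed n \<sigma> = m then 1 else 0::real))"
    by (rule sum.cong) auto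
  also have "\<dots> = (\<Sum>\<sigma>\<in>?P. 1) - (\<Sum>\<sigma>\<in>?P. \<Sum>m<k. if num_fixed n \<sigma> = m then 1 else 0::real)"
    by (rule sum_subtractf)
  also have "\<dots> = fact n - (\<Sum>m<k. \<Sum>\<sigma>\<in>?P. if num_fixed n \<sigma> = m then 1 else 0::real)"
    unfolding sum.swap[of _ ?P "{..<k}"] using cP by simp
  also have "\<dots> = fact n - (\<Sum>m<k. fact n / fact m * (\<Sum>i\<le>n-m. (-1)^i / fact i))"
    using assms by (intro arg_cong2[where f="(-)"] sum.cong refl count_eq) auto
  finally have c: "real (card (?P \<inter> {\<sigma>. num_fixed n \<sigma> \<ge> k})) = fact n - (\<Sum>m<k. fact n / fact m * (\<Sum>i\<le>n-m. (-1)^i / fact i))" .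
  have e: "(\<Sum>m<k. fact n / fact m * (\<Sum>i\<le>n-m. (-1)^i / fact i)) = fact n * (\<Sum>m<k. (\<Sum>i<Suc (n-m). (-1)^i / fact i) / (fact m :: real))"
  proof -
    have "(\<Sum>m<k. fact n / fact m * (\<Sum>i\<le>n-m. (-1)^i / fact i)) = (\<Sum>m<k. fact n * ((\<Sum>i<Suc (n-m). (-1)^i / fact i) / (fact m :: real)))"
      by (rule sum.cong) (simp_all add: lessThan_Suc_atMost)
    then show ?thesis
      by (simp only: sum_distrib_left[of "fact n" "\<lambda>m. (\<Sum>i<Suc (n-m). (-1)^i / fact i) / (fact m :: real)" "{..<k}"])
  qed
  have cP': "real (card ?P) = fact n" using cP by simp
  show ?thesis
    unfolding unif_perm_def measure_pmf_of_set[OF neP finP] c cP' e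
    by (simp add: field_simps)
qed

lemma probY:
  "measure_pmf.prob (poisson_pmf 1) {j. j \<ge> k} = 1 - (\<Sum>m<k. exp (-1) / fact m)"
proof -
  have "{j. j \<ge> k} = space (measure_pmf (poisson_pmf 1)) - {..<k}" by auto
  then have "measure_pmf.prob (poisson_pmf 1) {j. j \<ge> k} = 1 - measure_pmf.prob (poisson_pmf 1) {..<k}"
    by (metis measure_pmf.prob_compl sets_measure_pmf UNIV_I)
  also have "measure_pmf.prob (poisson_pmf 1) {..<k} = (\<Sum>m<k. pmf (poisson_pmf 1) m)"
    by (simp add: measure_measure_pmf_finite)
  finally show ?thesis by simp
qed

lemma probY_lb:
  "measure_pmf.prob (poisson_pmf 1) {j. j \<ge> k} \<ge> exp (-1) / fact k"
proof -
  have "measure_pmf.prob (poisson_pmf 1) {k} \<le> measure_pmf.prob (poisson_pmf 1) {j. j \<ge> k}"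
    by (rule measure_pmf.finite_measure_mono) auto
  then show ?thesis by (simp add: measure_pmf_single)
qed

lemma main_bound:
  fixes n k :: nat
  assumes n: "n > 0" and k: "k > 0" and ck: "real k ^ 2 / real n \<le> 1/4"
  shows "\<bar>measure_pmf.prob (unif_perm n) {\<sigma>. num_fixed n \<sigma> \<ge> k}
         / measure_pmf.prob (poisson_pmf 1) {j. j \<ge> k} - 1\<bar> \<le> 6 * real k ^ 2 / real n"
proof -
  have "4 * real k ^ 2 \<le> real n" using ck n by (simp add: field_simps)
  then have "4 * k^2 \<le> n" by (metis of_nat_le_iff of_nat_mult of_nat_numeral of_nat_power)
  moreover have "k \<le> k^2" using k by (simp add: power2_eq_square)
  ultimately have kn: "4 * k \<le> n" by linarith
  then have kle: "k \<le> n" by simp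
  define PW where "PW = measure_pmf.prob (unif_perm n) {\<sigma>. num_fixed n \<sigma> \<ge> k}"
  define PY where "PY = measure_pmf.prob (poisson_pmf 1) {j. j \<ge> k}"
  define F where "F = (fact (n - k + 2) :: real)"
  have Fpos: "F > 0" unfolding F_def by simp
  have D: "\<bar>PW - PY\<bar> \<le> real k / F"
  proof -
    have "PW - PY = (\<Sum>m<k. (exp (-1) - (\<Sum>i<Suc (n-m). (-1)^i / fact i)) / fact m)"
      unfolding PW_def PY_def probW[OF kle] probY
      by (simp del: sum.lessThan_Suc add: sum_subtractf diff_divide_distrib)
    then have "\<bar>PW - PY\<bar> \<le> (\<Sum>m<k. \<bar>(exp (-1) - (\<Sum>i<Suc (n-m). (-1)^i / fact i)) / fact m\<bar>)"
      by (simp only: sum_abs)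
    also have "\<dots> \<le> (\<Sum>m<k. 1 / F)"
    proof (rule sum_mono)
      fix m assume "m \<in> {..<k}"
      then have mk: "m < k" by simp
      have e: "\<bar>exp (-1) - (\<Sum>i<Suc (n-m). (-1)^i / fact i)\<bar> \<le> 1 / (fact (Suc (n-m)) :: real)"
        using exp_err[of "Suc (n-m)"] by simp
      have "fact (n - k + 2) \<le> (fact (Suc (n-m)) :: real)"
        using mk kn by (intro fact_mono) auto
      then have "1 / fact (Suc (n-m)) \<le> 1 / F" unfolding F_def
        by (simp add: divide_simps)
      moreover have "(1::real) \<le> fact m" by simp
      ultimately show "\<bar>(exp (-1) - (\<Sum>i<Suc (n-m). (-1)^i / fact i)) / fact m\<bar> \<le> 1 / F"
      proof -
        let ?x = "exp (-1::real) - (\<Sum>i<Suc (n-m). (-1)^i / fact i)"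
        have "\<bar>?x / fact m\<bar> = \<bar>?x\<bar> / fact m" by (subst abs_divide) (simp del: sum.lessThan_Suc)
        also have "\<dots> \<le> \<bar>?x\<bar> / 1" by (rule divide_left_mono) auto
        finally show ?thesis using e \<open>1 / fact (Suc (n-m)) \<le> 1 / F\<close> by linarith
      qed
    qed
    also have "\<dots> = real k / F" by simp
    finally show ?thesis .
  qed
  have Y: "PY \<ge> exp (-1) / fact k" unfolding PY_def by (rule probY_lb)
  have "exp (-1) / fact k > (0::real)" by simp
  then have Ypos: "PY > 0" using Y by linarith
  have Fk: "F \<ge> fact k * real (n - k + 2)"
  proof -
    have "fact k \<le> (fact (n - k + 1) :: real)" using kn by (intro fact_mono) auto
    moreover have "F = real (n - k + 2) * fact (n - k + 1)"
    proof -
      have "n - k + 2 = Suc (n - k + 1)" by simp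
      then show ?thesis unfolding F_def by (simp only: fact_Suc)
    qed
    ultimately show ?thesis by (simp add: mult_left_mono)
  qed
  have nk2: "real n \<le> 2 * real (n - k + 2)" using kn by (simp add: of_nat_diff)
  have "\<bar>PW / PY - 1\<bar> = \<bar>PW - PY\<bar> / PY" using Ypos by (simp add: abs_div field_simps)
  also have "\<dots> \<le> (real k / F) / (exp (-1) / fact k)"
    using D Y Ypos by (intro frac_le) auto
  also have "\<dots> = real k * fact k * exp 1 / F" by (simp add: exp_minus field_simps)
  also have "\<dots> \<le> real k * fact k * exp 1 / (fact k * real (n - k + 2))"
  proof (rule divide_left_mono[OF Fk])
    have Npos: "real (n - k + 2) > 0" by simp
    show "0 < F * (fact k * real (n - k + 2))" by (intro mult_pos_pos Fpos Npos) simp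
    show "0 \<le> real k * fact k * exp 1" by simp
  qed
  also have "\<dots> = real k * exp 1 / real (n - k + 2)" by simp
  also have "\<dots> \<le> real k * 3 / real (n - k + 2)"
    by (intro divide_right_mono mult_left_mono) (use exp_le in auto)
  also have "\<dots> \<le> 6 * real k / real n"
  proof -
    have "real k * 3 * real n \<le> real k * 3 * (2 * real (n - k + 2))"
      by (rule mult_left_mono[OF nk2]) auto
    then show ?thesis using n kn by (simp add: divide_simps algebra_simps)
  qed
  also have "\<dots> \<le> 6 * real k ^ 2 / real n"
    using k n by (simp add: divide_simps power2_eq_square)
  finally show ?thesis
    unfolding PW_def PY_def .
qed

theorem mainTheorem7:
  shows "\<exists>c C :: real. c > 0 \<and> C > 0 \<and>
    (\<forall>n k :: nat. n > 0 \<longrightarrow> k > 0 \<longrightarrow> real k ^ 2 / real n \<le> c \<longrightarrow>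
      \<bar>measure_pmf.prob (unif_perm n) {\<sigma>. num_fixed n \<sigma> \<ge> k}
         / measure_pmf.prob (poisson_pmf 1) {j. j \<ge> k} - 1\<bar>
       \<le> C * real k ^ 2 / real n)"
  using main_bound by (intro exI[of _ "1/4::real"] exI[of _ "6::real"]) auto

end
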